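(* If there exists a $(G,[k_1,\dots,k_t],\lambda)$ Hadamard partitioned difference family and $G$ has a subgroup of index $2$, then the Diophantine system $$x_1+\cdots+x_t=\lambda,\qquad 2x_1(k_1-x_1)+\cdots+2x_t(k_t-x_t)=\lambda^2$$ has an integer solution $(s_1,\dots,s_t)$ with $0\le s_i\le k_i$ for each $i$.
   Context: $G$ is a finite group written additively, with difference $x-y:=x+(-y)$. For $B\subseteq G$, $\Delta B$ is the multiset $\{x-y: x,y\in B, x\neq y\}$; for $\mathcal{F}=\{B_1,\dots,B_t\}$, $\Delta\mathcal{F}$ is the multiset union of the $\Delta B_i$. $\mathcal{F}$ is a $(G,[k_1,\dots,k_t],\lambda)$ partitioned difference family if the $B_i$ partition $G$, $|B_i|=k_i$, and $\Delta\mathcal{F}$ contains every non-zero element of $G$ exactly $\lambda$ times; it is Hadamard if $|G|=2\lambda$. *)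

theory Defs
  imports Main "HOL-Library.Multiset"
begin

text \<open>Finite group G = the (finite) type 'a of class group_add, written additively.\<close>

definition is_subgroup :: "'a::group_add set \<Rightarrow> bool" where
  "is_subgroup H \<longleftrightarrow> 0 \<in> H \<and> (\<forall>x\<in>H. \<forall>y\<in>H. x + y \<in> H) \<and> (\<forall>x\<in>H. - x \<in> H)"

definition has_index2_subgroup :: "'a::{group_add,finite} itself \<Rightarrow> bool" where
  "has_index2_subgroup _ \<longleftrightarrow> (\<exists>H::'a set. is_subgroup H \<and> card (UNIV :: 'a set) = 2 * card H)"

definition delta :: "'a::group_add set \<Rightarrow> 'a multiset" where
  "delta B = image_mset (\<lambda>(x, y). x - y) (mset_set {(x, y). x \<in> B \<and> y \<in> B \<and> x \<noteq> y})"

definition delta_family :: "'a::group_add set list \<Rightarrow> 'a multiset" where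
  "delta_family Bs = sum_list (map delta Bs)"

text \<open>(G,[k_1,...,k_t],lambda) partitioned difference family, blocks indexed 0..t-1.\<close>
definition is_PDF :: "'a::{group_add,finite} set list \<Rightarrow> nat list \<Rightarrow> nat \<Rightarrow> bool" where
  "is_PDF Bs ks lam \<longleftrightarrow>
     length Bs = length ks \<and>
     (\<forall>i<length Bs. \<forall>j<length Bs. i \<noteq> j \<longrightarrow> Bs ! i \<inter> Bs ! j = {}) \<and>
     (\<Union>i<length Bs. Bs ! i) = UNIV \<and>
     (\<forall>i<length Bs. card (Bs ! i) = ks ! i) \<and>
     (\<forall>g. g \<noteq> 0 \<longrightarrow> count (delta_family Bs) g = lam)"

definition is_Hadamard_PDF :: "'a::{group_add,finite} set list \<Rightarrow> nat list \<Rightarrow> nat \<Rightarrow> bool" where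
  "is_Hadamard_PDF Bs ks lam \<longleftrightarrow> is_PDF Bs ks lam \<and> card (UNIV :: 'a set) = 2 * lam"

end

theory Submission
  imports Defs
begin

lemma size_filter_count:
  fixes M :: "'a::finite multiset"
  shows "size (filter_mset P M) = (\<Sum>x\<in>{x. P x}. count M x)"
proof (induction M)
  case empty
  then show ?case by simp
next
  case (add a M)
  have "(\<Sum>x\<in>{x. P x}. count (add_mset a M) x) = (\<Sum>x\<in>{x. P x}. count M x + (if x = a then 1 else 0))"
    by (intro sum.cong) auto
  also have "\<dots> = (\<Sum>x\<in>{x. P x}. count M x) + (if P a then 1 else 0)"
    by (simp add: sum.distrib)
  finally show ?case using add by simp
qed

lemma size_filter_delta:
  fixes B :: "'a::{group_add,finite} set"
  shows "size (filter_mset P (delta B)) = card {(x, y). x \<in> B \<and> y \<in> B \<and> x \<noteq> y \<and> P (x - y)}"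
proof -
  have "filter_mset P (delta B) = image_mset (\<lambda>(x, y). x - y)
      (mset_set {p \<in> {(x, y). x \<in> B \<and> y \<in> B \<and> x \<noteq> y}. P (case p of (x, y) \<Rightarrow> x - y)})"
    unfolding delta_def filter_mset_image_mset by simp
  moreover have "{p \<in> {(x, y). x \<in> B \<and> y \<in> B \<and> x \<noteq> y}. P (case p of (x, y) \<Rightarrow> x - y)}
     = {(x, y). x \<in> B \<and> y \<in> B \<and> x \<noteq> y \<and> P (x - y)}" by auto
  ultimately show ?thesis by simp
qed

lemma size_filter_delta_family:
  "size (filter_mset P (delta_family Bs)) = (\<Sum>i<length Bs. size (filter_mset P (delta (Bs ! i))))"
proof -
  have "size (filter_mset P (delta_family Bs)) = sum_list (map (\<lambda>B. size (filter_mset P (delta B))) Bs)"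
    unfolding delta_family_def by (induction Bs) auto
  also have "\<dots> = (\<Sum>i<length Bs. size (filter_mset P (delta (Bs ! i))))"
    by (simp add: sum_list_sum_nth lessThan_atLeast0)
  finally show ?thesis .
qed

lemma index2_props:
  fixes H :: "'a::{group_add,finite} set"
  assumes "is_subgroup H" "card (UNIV :: 'a set) = 2 * card H"
  shows "x - y \<notin> H \<longleftrightarrow> (x \<in> H \<longleftrightarrow> y \<notin> H)"
proof -
  have add: "\<And>a b. a \<in> H \<Longrightarrow> b \<in> H \<Longrightarrow> a + b \<in> H" and neg: "\<And>a. a \<in> H \<Longrightarrow> - a \<in> H"
    using assms(1) unfolding is_subgroup_def by auto
  show ?thesis
  proof (cases "y \<in> H")
    case True
    have "x \<in> H" if "x - y \<in> H" using add[OF that True] by simp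
    moreover have "x - y \<in> H" if "x \<in> H" using add[OF that neg[OF True]] by simp
    ultimately show ?thesis using True by blast
  next
    case False
    have "x - y \<notin> H" if "x \<in> H"
    proof
      assume "x - y \<in> H"
      then have m: "- x + (x - y) \<in> H" by (rule add[OF neg[OF that]])
      have e: "- x + (x - y) = - y" unfolding diff_conv_add_uminus by (rule minus_add_cancel)
      have "- y \<in> H" using m unfolding e .
      then have "- (- y) \<in> H" by (rule neg)
      then show False using False by simp
    qed
    moreover have "x - y \<in> H" if "x \<notin> H"
    proof -
      let ?C = "(\<lambda>h. h + y) ` H"
      have inj: "inj_on (\<lambda>h. h + y) H" by (rule inj_onI) simp
      have disj: "?C \<inter> H = {}"
      proof (rule ccontr)
        assume "?C \<inter> H \<noteq> {}"
        then obtain h where h: "h \<in> H" "h + y \<in> H" by auto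
        then have "- h + (h + y) \<in> H" using add[OF neg[OF h(1)] h(2)] by blast
        then show False using False by simp
      qed
      have "card (?C \<union> H) = card ?C + card H" using disj by (simp add: card_Un_disjoint)
      also have "\<dots> = card (UNIV :: 'a set)" using assms(2) card_image[OF inj] by simp
      finally have "?C \<union> H = UNIV"
        using card_subset_eq[of UNIV "?C \<union> H"] by simp
      then have "x \<in> ?C" using that by blast
      then obtain h where "h \<in> H" "x = h + y" by auto
      then show ?thesis by simp
    qed
    ultimately show ?thesis using False by blast
  qed
qed

lemma block_set:
  fixes H B :: "'a::{group_add,finite} set"
  assumes "is_subgroup H" "card (UNIV :: 'a set) = 2 * card H"
  shows "{(x, y). x \<in> B \<and> y \<in> B \<and> x \<noteq> y \<and> x - y \<notin> H}
      = (B \<inter> H) \<times> (B - H) \<union> (B - H) \<times> (B \<inter> H)"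
proof -
  have P: "x - y \<notin> H \<longleftrightarrow> (x \<in> H \<longleftrightarrow> y \<notin> H)" for x y using index2_props[OF assms] .
  show ?thesis
  proof (intro set_eqI iffI)
    fix p assume "p \<in> {(x, y). x \<in> B \<and> y \<in> B \<and> x \<noteq> y \<and> x - y \<notin> H}"
    then obtain x y where "p = (x, y)" "x \<in> B" "y \<in> B" "x - y \<notin> H" by blast
    then show "p \<in> (B \<inter> H) \<times> (B - H) \<union> (B - H) \<times> (B \<inter> H)" using P[of x y] by blast
  next
    fix p assume "p \<in> (B \<inter> H) \<times> (B - H) \<union> (B - H) \<times> (B \<inter> H)"
    then obtain x y where "p = (x, y)" "x \<in> B" "y \<in> B" "x \<in> H \<longleftrightarrow> y \<notin> H" by blast
    moreover then have "x \<noteq> y" by blast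
    ultimately show "p \<in> {(x, y). x \<in> B \<and> y \<in> B \<and> x \<noteq> y \<and> x - y \<notin> H}" using P[of x y] by blast
  qed
qed

lemma block_count:
  fixes H B :: "'a::{group_add,finite} set"
  assumes "is_subgroup H" "card (UNIV :: 'a set) = 2 * card H"
  shows "card {(x, y). x \<in> B \<and> y \<in> B \<and> x \<noteq> y \<and> x - y \<notin> H}
     = 2 * card (B \<inter> H) * (card B - card (B \<inter> H))"
proof -
  have d: "(B \<inter> H) \<times> (B - H) \<inter> (B - H) \<times> (B \<inter> H) = {}" by blast
  have "card ((B \<inter> H) \<times> (B - H) \<union> (B - H) \<times> (B \<inter> H))
      = card (B \<inter> H) * card (B - H) + card (B - H) * card (B \<inter> H)"
    using card_Un_disjoint[OF _ _ d] by (simp add: card_cartesian_product)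
  moreover have "card (B - H) = card B - card (B \<inter> H)"
    by (simp add: card_Diff_subset_Int)
  ultimately show ?thesis unfolding block_set[OF assms] by simp
qed


theorem corollary5p2:
  fixes Bs :: "'a::{group_add,finite} set list" and ks :: "nat list" and lam :: nat
  assumes "is_Hadamard_PDF Bs ks lam"
    and "has_index2_subgroup TYPE('a)"
  shows "\<exists>s :: nat \<Rightarrow> int.
           (\<forall>i<length ks. 0 \<le> s i \<and> s i \<le> int (ks ! i)) \<and>
           (\<Sum>i<length ks. s i) = int lam \<and>
           (\<Sum>i<length ks. 2 * s i * (int (ks ! i) - s i)) = (int lam)^2"
proof -
  obtain H :: "'a set" where H: "is_subgroup H" "card (UNIV :: 'a set) = 2 * card H"
    using assms(2) unfolding has_index2_subgroup_def by blast
  have len: "length Bs = length ks"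
    and disj: "\<forall>i<length Bs. \<forall>j<length Bs. i \<noteq> j \<longrightarrow> Bs ! i \<inter> Bs ! j = {}"
    and cov: "(\<Union>i<length Bs. Bs ! i) = UNIV"
    and cards: "\<forall>i<length Bs. card (Bs ! i) = ks ! i"
    and cnt: "\<forall>g. g \<noteq> 0 \<longrightarrow> count (delta_family Bs) g = lam"
    and ord: "card (UNIV :: 'a set) = 2 * lam"
    using assms(1) unfolding is_Hadamard_PDF_def is_PDF_def by auto
  have cH: "card H = lam" using H(2) ord by simp
  have z: "0 \<in> H" using H(1) unfolding is_subgroup_def by blast
  define s where "s i = int (card (Bs ! i \<inter> H))" for i
  have le: "card (Bs ! i \<inter> H) \<le> card (Bs ! i)" for i
    by (simp add: card_mono)
  have A: "\<forall>i<length ks. 0 \<le> s i \<and> s i \<le> int (ks ! i)"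
  proof (intro allI impI conjI)
    fix i assume "i < length ks"
    then have "ks ! i = card (Bs ! i)" using cards len by auto
    then show "s i \<le> int (ks ! i)" unfolding s_def using le[of i] by simp
  qed (simp add: s_def)
  have "(\<Sum>i<length Bs. card (Bs ! i \<inter> H)) = card (\<Union>i<length Bs. Bs ! i \<inter> H)"
    by (rule card_UN_disjoint[symmetric]) (use disj in auto)
  also have "(\<Union>i<length Bs. Bs ! i \<inter> H) = H" using cov by blast
  finally have "(\<Sum>i<length Bs. card (Bs ! i \<inter> H)) = lam" using cH by simp
  then have "int (\<Sum>i<length Bs. card (Bs ! i \<inter> H)) = int lam" by simp
  then have B: "(\<Sum>i<length ks. s i) = int lam"
    unfolding s_def len[symmetric] of_nat_sum .
  have "size (filter_mset (\<lambda>g. g \<notin> H) (delta_family Bs)) = (\<Sum>g\<in>{g. g \<notin> H}. count (delta_family Bs) g)"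
    by (rule size_filter_count)
  also have "\<dots> = (\<Sum>g\<in>{g. g \<notin> H}. lam)"
    by (intro sum.cong refl) (metis cnt z mem_Collect_eq)
  also have "\<dots> = card (- H) * lam" by (simp add: Compl_eq)
  also have "card (- H) = lam"
  proof -
    have "card (- H) = card (UNIV::'a set) - card H" by (simp add: Compl_eq_Diff_UNIV card_Diff_subset)
    then show ?thesis using cH ord by simp
  qed
  finally have tot: "size (filter_mset (\<lambda>g. g \<notin> H) (delta_family Bs)) = lam * lam" .
  have "size (filter_mset (\<lambda>g. g \<notin> H) (delta_family Bs))
      = (\<Sum>i<length Bs. 2 * card (Bs ! i \<inter> H) * (card (Bs ! i) - card (Bs ! i \<inter> H)))"
    unfolding size_filter_delta_family size_filter_delta block_count[OF H] ..
  then have eq: "(\<Sum>i<length Bs. 2 * card (Bs ! i \<inter> H) * (card (Bs ! i) - card (Bs ! i \<inter> H))) = lam * lam"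
    using tot by simp
  have "(\<Sum>i<length ks. 2 * s i * (int (ks ! i) - s i))
      = (\<Sum>i<length Bs. int (2 * card (Bs ! i \<inter> H) * (card (Bs ! i) - card (Bs ! i \<inter> H))))"
    unfolding len
  proof (intro sum.cong refl)
    fix i assume "i \<in> {..<length ks}"
    then have k: "ks ! i = card (Bs ! i)" using cards len by auto
    show "2 * s i * (int (ks ! i) - s i) = int (2 * card (Bs ! i \<inter> H) * (card (Bs ! i) - card (Bs ! i \<inter> H)))"
      unfolding s_def k using le[of i] by (simp add: of_nat_diff)
  qed
  also have "\<dots> = int (lam * lam)" unfolding of_nat_sum[symmetric] eq ..
  finally have C: "(\<Sum>i<length ks. 2 * s i * (int (ks ! i) - s i)) = (int lam)^2"
    by (simp add: power2_eq_square)
  show ?thesis using A B C by blast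
qed

end
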